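(* Let $k\ge1$, $D_k=3k^2+3k+1$, and let $c\in P_k$. Let $\Delta=c+V(T_{D_k})=\{c+a\alpha_1+b\alpha_2 : 0\le b\le a\le D_k\}$. Then exactly $3k$ points of $P_k$ lie outside $\Delta$ and are at distance at most $k$ in $T_\infty$ from some vertex of $\Delta$.
   Context: Let $\alpha_1=(1,0)$ and $\alpha_2=(-\tfrac12,\tfrac{\sqrt3}{2})$. The triangular lattice $T_\infty$ is the infinite graph with vertex set $\{a\alpha_1+b\alpha_2 : a,b\in\mathbb Z\}$, two vertices being adjacent iff their Euclidean distance is $1$; distances are graph distances. For $d\ge0$, $T_d$ is the subgraph of $T_\infty$ induced by the vertices $a\alpha_1+b\alpha_2$ with $0\le b\le a\le d$. For $k\ge 1$, let $D_k=3k^2+3k+1$ and let $P_k$ (the pattern $P_{k+1,1}$) be the sublattice $\{x\,u+y\,v : x,y\in\mathbb Z\}$, where $u=(2k+1)\alpha_1+k\alpha_2$ and $v=(k+1)\alpha_1+(2k+1)\alpha_2$. *)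

theory Defs
  imports Complex_Main
begin

text \<open>Vertices of the triangular lattice are encoded by integer coordinates (a,b),
  standing for the point a*alpha1 + b*alpha2 of the plane (identified with the
  complex numbers), where alpha1 = 1 and alpha2 = -1/2 + i*sqrt 3/2.\<close>

definition alpha1 :: complex where "alpha1 = Complex 1 0"
definition alpha2 :: complex where "alpha2 = Complex (-1/2) (sqrt 3 / 2)"

definition tri_pt :: "int \<times> int \<Rightarrow> complex" where
  "tri_pt p = of_int (fst p) * alpha1 + of_int (snd p) * alpha2"

definition tri_adj :: "(int \<times> int) rel" where
  "tri_adj = {(p, q). cmod (tri_pt p - tri_pt q) = 1}"

definition tri_dist_le :: "int \<times> int \<Rightarrow> int \<times> int \<Rightarrow> nat \<Rightarrow> bool" where
  "tri_dist_le p q n \<longleftrightarrow> (\<exists>m\<le>n. (p, q) \<in> tri_adj ^^ m)"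

definition Dk :: "nat \<Rightarrow> nat" where
  "Dk k = 3 * k^2 + 3 * k + 1"

text \<open>The pattern P_k = {x u + y v}, u = (2k+1)alpha1 + k alpha2, v = (k+1)alpha1 + (2k+1)alpha2.\<close>
definition Pk :: "nat \<Rightarrow> (int \<times> int) set" where
  "Pk k = {(x * (2 * int k + 1) + y * (int k + 1), x * int k + y * (2 * int k + 1)) | x y. True}"

definition tri_Delta :: "int \<times> int \<Rightarrow> nat \<Rightarrow> (int \<times> int) set" where
  "tri_Delta c d = {(fst c + a, snd c + b) | a b. 0 \<le> b \<and> b \<le> a \<and> a \<le> int d}"

end

theory Submission imports Defs begin
lemma tri_pt_diff: "tri_pt (a,b) - tri_pt (c,d) = Complex (real_of_int (a-c) - real_of_int (b-d)/2) (real_of_int (b-d) * sqrt 3 / 2)"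
  by (simp add: tri_pt_def alpha1_def alpha2_def complex_eq_iff algebra_simps field_simps)
lemma tri_adj_iff: "((a,b),(c,d)) \<in> tri_adj \<longleftrightarrow> (a-c)^2 - (a-c)*(b-d) + (b-d)^2 = (1::int)"
proof -
  define x where "x = real_of_int (a-c)"
  define y where "y = real_of_int (b-d)"
  have s3: "(sqrt 3)^2 = 3" by simp
  have "((a,b),(c,d)) \<in> tri_adj \<longleftrightarrow> cmod (Complex (x - y/2) (y * sqrt 3 / 2)) = 1"
    by (simp add: tri_adj_def tri_pt_diff x_def y_def)
  also have "\<dots> \<longleftrightarrow> (x - y/2)^2 + (y * sqrt 3 / 2)^2 = 1"
    by (simp add: cmod_def)
  also have "(x - y/2)^2 + (y * sqrt 3 / 2)^2 = x^2 - x*y + y^2"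
    by (simp add: power2_eq_square algebra_simps s3[unfolded power2_eq_square] field_simps)
  also have "x^2 - x*y + y^2 = real_of_int ((a-c)^2 - (a-c)*(b-d) + (b-d)^2)"
    by (simp add: x_def y_def)
  finally show ?thesis by linarith
qed

lemma adj_bounds:
  assumes "(p,q) \<in> tri_adj"
  shows "\<bar>fst p - fst q\<bar> \<le> 1 \<and> \<bar>snd p - snd q\<bar> \<le> 1 \<and> \<bar>(fst p - snd p) - (fst q - snd q)\<bar> \<le> 1"
proof -
  obtain a b c d where pq: "p = (a,b)" "q = (c,d)" by (cases p, cases q) auto
  define u where "u = a - c"
  define v where "v = b - d"
  have e: "u^2 - u*v + v^2 = 1" using assms pq tri_adj_iff u_def v_def by simp
  have e1: "(2*u - v)^2 + 3*v^2 = 4" using e by (simp add: power2_eq_square algebra_simps)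
  have e2: "(2*v - u)^2 + 3*u^2 = 4" using e by (simp add: power2_eq_square algebra_simps)
  have "v^2 \<le> 1" using e1 by (smt (verit) zero_le_power2)
  hence v1: "\<bar>v\<bar> \<le> 1" by (metis abs_le_square_iff abs_one power_one)
  have "u^2 \<le> 1" using e2 by (smt (verit) zero_le_power2)
  hence u1: "\<bar>u\<bar> \<le> 1" by (metis abs_le_square_iff abs_one power_one)
  have "\<bar>u - v\<bar> \<le> 1"
  proof (rule ccontr)
    assume "\<not> ?thesis"
    then have "(u = 1 \<and> v = -1) \<or> (u = -1 \<and> v = 1)" using u1 v1 by auto
    then show False using e by auto
  qed
  then show ?thesis using u1 v1 pq u_def v_def by (simp add: algebra_simps)
qed

lemma walk_bounds:
  "(p,q) \<in> tri_adj ^^ m \<Longrightarrow> \<bar>fst p - fst q\<bar> \<le> int m \<and> \<bar>snd p - snd q\<bar> \<le> int m \<and> \<bar>(fst p - snd p) - (fst q - snd q)\<bar> \<le> int m"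
proof (induction m arbitrary: q)
  case 0
  then show ?case by simp
next
  case (Suc m)
  then obtain r where r: "(p,r) \<in> tri_adj ^^ m" "(r,q) \<in> tri_adj" by auto
  have "\<bar>fst p - fst r\<bar> \<le> int m \<and> \<bar>snd p - snd r\<bar> \<le> int m \<and> \<bar>(fst p - snd p) - (fst r - snd r)\<bar> \<le> int m"
    using Suc.IH r(1) by blast
  moreover have "\<bar>fst r - fst q\<bar> \<le> 1 \<and> \<bar>snd r - snd q\<bar> \<le> 1 \<and> \<bar>(fst r - snd r) - (fst q - snd q)\<bar> \<le> 1"
    using adj_bounds r(2) by blast
  ultimately show ?case by auto
qed

lemma walk_b_up: "((a,b),(a,b+int n)) \<in> tri_adj ^^ n"
proof (induction n)
  case 0 then show ?case by simp
next
  case (Suc n)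
  have "((a,b+int n),(a,b+int (Suc n))) \<in> tri_adj" by (simp add: tri_adj_iff)
  with Suc show ?case by (auto simp del: of_nat_Suc)
qed

lemma walk_b_down: "((a,b),(a,b-int n)) \<in> tri_adj ^^ n"
proof (induction n)
  case 0 then show ?case by simp
next
  case (Suc n)
  have "((a,b-int n),(a,b-int (Suc n))) \<in> tri_adj" by (simp add: tri_adj_iff)
  with Suc show ?case by (auto simp del: of_nat_Suc)
qed

lemma walk_a_down: "((a,b),(a-int n,b)) \<in> tri_adj ^^ n"
proof (induction n)
  case 0 then show ?case by simp
next
  case (Suc n)
  have "((a-int n,b),(a-int (Suc n),b)) \<in> tri_adj" by (simp add: tri_adj_iff)
  with Suc show ?case by (auto simp del: of_nat_Suc)
qed

lemma Pk_div:
  assumes "p \<in> Pk k"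
  shows "(3*int k^2+3*int k+1) dvd fst p + (3*int k+1) * snd p"
    "(3*int k^2+3*int k+1) dvd snd p - (3*int k+2) * fst p"
    "(3*int k^2+3*int k+1) dvd fst p - (3*int k+2) * (fst p - snd p)"
proof -
  obtain x y where p: "p = (x * (2 * int k + 1) + y * (int k + 1), x * int k + y * (2 * int k + 1))"
    using assms unfolding Pk_def by auto
  show "(3*int k^2+3*int k+1) dvd fst p + (3*int k+1) * snd p"
    by (rule dvdI[of _ _ "x + 2*y"]) (simp add: p algebra_simps power2_eq_square)
  show "(3*int k^2+3*int k+1) dvd snd p - (3*int k+2) * fst p"
    by (rule dvdI[of _ _ "-2*x - y"]) (simp add: p algebra_simps power2_eq_square)
  show "(3*int k^2+3*int k+1) dvd fst p - (3*int k+2) * (fst p - snd p)"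
    by (rule dvdI[of _ _ "y - x"]) (simp add: p algebra_simps power2_eq_square)
qed

lemma Delta_iff: "p \<in> tri_Delta c d \<longleftrightarrow> 0 \<le> snd p - snd c \<and> snd p - snd c \<le> fst p - fst c \<and> fst p - fst c \<le> int d"
proof
  assume "p \<in> tri_Delta c d" then show "0 \<le> snd p - snd c \<and> snd p - snd c \<le> fst p - fst c \<and> fst p - fst c \<le> int d"
    unfolding tri_Delta_def by auto
next
  assume h: "0 \<le> snd p - snd c \<and> snd p - snd c \<le> fst p - fst c \<and> fst p - fst c \<le> int d"
  have "p = (fst c + (fst p - fst c), snd c + (snd p - snd c))" by simp
  then show "p \<in> tri_Delta c d" unfolding tri_Delta_def using h by blast
qed

theorem lemma2:
  fixes k :: nat and c :: "int \<times> int"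
  assumes "k \<ge> 1" and "c \<in> Pk k"
  shows "finite {p \<in> Pk k. p \<notin> tri_Delta c (Dk k) \<and> (\<exists>q\<in>tri_Delta c (Dk k). tri_dist_le p q k)}
    \<and> card {p \<in> Pk k. p \<notin> tri_Delta c (Dk k) \<and> (\<exists>q\<in>tri_Delta c (Dk k). tri_dist_le p q k)} = 3 * k"
proof -
  define K where "K = int k"
  define D where "D = 3*K^2+3*K+1"
  have K1: "K \<ge> 1" using assms K_def by simp
  have DD: "int (Dk k) = D" by (simp add: Dk_def D_def K_def)
  have K2: "K^2 \<ge> K" using K1 by (simp add: power2_eq_square)
  have Dpos: "D > 0" using K1 K2 D_def by linarith
  define f1 where "f1 = (\<lambda>j::int. (fst c + (3*K+1)*j, snd c - j))"
  define f2 where "f2 = (\<lambda>j::int. (fst c + D + j, snd c + (3*K+2)*j))"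
  define f3 where "f3 = (\<lambda>j::int. (fst c + D - (3*K+2)*j, snd c + D - (3*K+1)*j))"
  define S where "S = {p \<in> Pk k. p \<notin> tri_Delta c (Dk k) \<and> (\<exists>q\<in>tri_Delta c (Dk k). tri_dist_le p q k)}"
  have PkK: "Pk k = {(x*(2*K+1)+y*(K+1), x*K+y*(2*K+1)) | x y. True}" by (simp add: Pk_def K_def)
  obtain x0 y0 where c: "c = (x0*(2*K+1) + y0*(K+1), x0*K + y0*(2*K+1))"
    using assms(2) unfolding PkK by auto
  have mono1: "(3*K+1)*j \<le> 3*K^2+K" "(3*K+1)*j \<ge> 3*K+1" "(3*K+2)*j \<le> 3*K^2+2*K" "(3*K+2)*j \<ge> 3*K+2"
    if "1 \<le> j" "j \<le> K" for j
  proof -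
    have "(3*K+1)*j \<le> (3*K+1)*K" using K1 that by (intro mult_left_mono) auto
    then show "(3*K+1)*j \<le> 3*K^2+K" by (simp add: algebra_simps power2_eq_square)
    have "(3*K+2)*j \<le> (3*K+2)*K" using K1 that by (intro mult_left_mono) auto
    then show "(3*K+2)*j \<le> 3*K^2+2*K" by (simp add: algebra_simps power2_eq_square)
    have "(3*K+1)*j \<ge> (3*K+1)*1" using K1 that by (intro mult_left_mono) auto
    then show "(3*K+1)*j \<ge> 3*K+1" by simp
    have "(3*K+2)*j \<ge> (3*K+2)*1" using K1 that by (intro mult_left_mono) auto
    then show "(3*K+2)*j \<ge> 3*K+2" by simp
  qed
  have Dt: "D*t \<ge> D" if "t \<ge> 1" for t using Dpos that by (metis mult.right_neutral mult_left_mono less_imp_le)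
  have Dt2: "D*t \<ge> 2*D" if "t \<ge> 2" for t using Dpos that by (metis mult.commute mult_left_mono less_imp_le)
  have Dtm: "D*t \<le> -D" if "t \<le> -1" for t using Dpos that
    by (metis mult.right_neutral mult_minus_right mult_left_mono less_imp_le)
  have Dt0: "D*t \<le> 0" if "t \<le> 0" for t using Dpos that by (simp add: mult_nonneg_nonpos)
  have seteq: "S = f1`{1..K} \<union> f2`{1..K} \<union> f3`{1..K}"
  proof (rule set_eqI, rule iffI)
    fix p assume "p \<in> S"
    then have pP: "p \<in> Pk k" and pn: "p \<notin> tri_Delta c (Dk k)"
      and "\<exists>q\<in>tri_Delta c (Dk k). tri_dist_le p q k" unfolding S_def by auto
    then obtain q m where q: "q \<in> tri_Delta c (Dk k)" "m \<le> k" "(p,q) \<in> tri_adj^^m"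
      unfolding tri_dist_le_def by auto
    define A where "A = fst p - fst c"
    define B where "B = snd p - snd c"
    define a where "a = fst q - fst c"
    define b where "b = snd q - snd c"
    have qd: "0 \<le> b" "b \<le> a" "a \<le> D" using q(1) Delta_iff[of q c "Dk k"] DD a_def b_def by auto
    have pout: "\<not> (0 \<le> B \<and> B \<le> A \<and> A \<le> D)" using pn Delta_iff[of p c "Dk k"] DD A_def B_def by auto
    have mk: "int m \<le> K" using q(2) K_def by simp
    have wb: "\<bar>A - a\<bar> \<le> K" "\<bar>B - b\<bar> \<le> K" "\<bar>(A - B) - (a - b)\<bar> \<le> K"
      using walk_bounds[OF q(3)] mk unfolding A_def B_def a_def b_def by (auto simp: algebra_simps)
    have d1: "D dvd A + (3*K+1)*B"
    proof -
      have "D dvd (fst p + (3*K+1) * snd p) - (fst c + (3*K+1) * snd c)"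
        using dvd_diff[OF Pk_div(1)[OF pP] Pk_div(1)[OF assms(2)]] by (simp add: D_def K_def)
      then show ?thesis by (simp add: A_def B_def algebra_simps)
    qed
    have d2: "D dvd B - (3*K+2)*A"
    proof -
      have "D dvd (snd p - (3*K+2) * fst p) - (snd c - (3*K+2) * fst c)"
        using dvd_diff[OF Pk_div(2)[OF pP] Pk_div(2)[OF assms(2)]] by (simp add: D_def K_def)
      then show ?thesis by (simp add: A_def B_def algebra_simps)
    qed
    have d3: "D dvd A - (3*K+2)*(A-B)"
    proof -
      have "D dvd (fst p - (3*K+2) * (fst p - snd p)) - (fst c - (3*K+2) * (fst c - snd c))"
        using dvd_diff[OF Pk_div(3)[OF pP] Pk_div(3)[OF assms(2)]] by (simp add: D_def K_def)
      then show ?thesis by (simp add: A_def B_def algebra_simps)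
    qed
    have pAB: "p = (fst c + A, snd c + B)" by (simp add: A_def B_def)
    consider "B < 0" | "B \<ge> 0" "A > D" | "B \<ge> 0" "A \<le> D" "B > A" using pout by linarith
    then show "p \<in> f1`{1..K} \<union> f2`{1..K} \<union> f3`{1..K}"
    proof cases
      case 1
      define j where "j = -B"
      have j: "1 \<le> j" "j \<le> K" using 1 wb qd j_def by auto
      obtain t where t: "A + (3*K+1)*B = D*t" using d1 by (auto elim: dvdE)
      have At: "A = D*t + (3*K+1)*j" using t j_def by (simp add: algebra_simps)
      have "t = 0"
      proof (rule ccontr)
        assume "t \<noteq> 0"
        then consider "t \<ge> 1" | "t \<le> -1" by linarith
        then show False
        proof cases
          case 1
          then show False using Dt[OF 1] mono1[OF j] At wb qd by linarith
        next
          case 2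
          then show False using Dtm[OF 2] mono1[OF j] At wb qd D_def by linarith
        qed
      qed
      then have "p = f1 j" using pAB At j_def f1_def by simp
      then show ?thesis using j by auto
    next
      case 2
      define j where "j = A - D"
      have j: "1 \<le> j" "j \<le> K" using 2 wb qd j_def by auto
      obtain t where t: "B - (3*K+2)*A = D*t" using d2 by (auto elim: dvdE)
      define s where "s = t + 3*K+2"
      have B0: "B = D*t + (3*K+2)*(D+j)" using t j_def by (simp add: algebra_simps)
      have Bt: "B = D*s + (3*K+2)*j" using B0 s_def
        by (simp add: algebra_simps)
      have "s = 0"
      proof (rule ccontr)
        assume "s \<noteq> 0"
        then consider "s \<ge> 1" | "s \<le> -1" by linarith
        then show False
        proof cases
          case 1
          then show False using Dt[OF 1] mono1[OF j] Bt wb qd by linarith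
        next
          case 2
          then show False using Dtm[OF 2] mono1[OF j] Bt wb qd D_def 2 by linarith
        qed
      qed
      then have "p = f2 j" using pAB Bt j_def f2_def by simp
      then show ?thesis using j by auto
    next
      case 3
      define j where "j = B - A"
      have j: "1 \<le> j" "j \<le> K" using 3 wb qd j_def by auto
      obtain t where t: "A - (3*K+2)*(A-B) = D*t" using d3 by (auto elim: dvdE)
      have AB: "A - B = -j" using j_def by simp
      have "A - (3*K+2)*(-j) = D*t" using t unfolding AB .
      then have At: "A = D*t - (3*K+2)*j" by (simp add: algebra_simps)
      have "t = 1"
      proof (rule ccontr)
        assume "t \<noteq> 1"
        then consider "t \<ge> 2" | "t \<le> 0" by linarith
        then show False
        proof cases
          case 1
          then show False using Dt2[OF 1] mono1[OF j] At wb qd D_def 3 by linarith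
        next
          case 2
          then show False using Dt0[OF 2] mono1[OF j] At wb qd by linarith
        qed
      qed
      then have A1: "A = D - (3*K+2)*j" using At by simp
      have B1: "B = D - (3*K+1)*j" using AB A1 by (simp add: algebra_simps)
      have "p = f3 j" unfolding f3_def using pAB A1 B1 by (simp add: algebra_simps)
      then show ?thesis using j by auto
    qed
  next
    fix p assume "p \<in> f1`{1..K} \<union> f2`{1..K} \<union> f3`{1..K}"
    then obtain j where j: "1 \<le> j" "j \<le> K" and
      pj: "p = f1 j \<or> p = f2 j \<or> p = f3 j" by auto
    have jk: "nat j \<le> k" using j K_def by simp
    have jn: "int (nat j) = j" using j by simp
    show "p \<in> S"
    proof (cases "p = f1 j")
      case True
      have P: "p \<in> Pk k" unfolding PkK
        by (rule CollectI, rule exI[of _ "x0 + 2*j"], rule exI[of _ "y0 - j"])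
           (simp add: True f1_def c algebra_simps)
      have N: "p \<notin> tri_Delta c (Dk k)" using True f1_def Delta_iff[of p c "Dk k"] j by simp
      define q where "q = (fst c + (3*K+1)*j, snd c)"
      have Q: "q \<in> tri_Delta c (Dk k)" using Delta_iff[of q c "Dk k"] DD q_def mono1[OF j] K1 j D_def K2
        by simp
      have W: "(p,q) \<in> tri_adj ^^ (nat j)" using walk_b_up[of "fst c + (3*K+1)*j" "snd c - j" "nat j", unfolded jn]
        by (simp add: True f1_def q_def jn)
      have "tri_dist_le p q k" unfolding tri_dist_le_def using W jk by blast
      then show ?thesis unfolding S_def using P N Q by blast
    next
      case F1: False
      show ?thesis
      proof (cases "p = f2 j")
        case True
        have P: "p \<in> Pk k" unfolding PkK
          by (rule CollectI, rule exI[of _ "x0 + 2*K+1-j"], rule exI[of _ "y0 - K + 2*j"])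
             (simp add: True f2_def c D_def algebra_simps power2_eq_square)
        have N: "p \<notin> tri_Delta c (Dk k)" using True f2_def Delta_iff[of p c "Dk k"] j DD by simp
        define q where "q = (fst c + D, snd c + (3*K+2)*j)"
        have Q: "q \<in> tri_Delta c (Dk k)" using Delta_iff[of q c "Dk k"] DD q_def mono1[OF j] K1 j D_def K2
          by simp
        have W: "(p,q) \<in> tri_adj ^^ (nat j)" using walk_a_down[of "fst c + D + j" "snd c + (3*K+2)*j" "nat j", unfolded jn]
          by (simp add: True f2_def q_def jn)
        have "tri_dist_le p q k" unfolding tri_dist_le_def using W jk by blast
      then show ?thesis unfolding S_def using P N Q by blast
      next
        case False
        then have T: "p = f3 j" using pj F1 by simp
        have P: "p \<in> Pk k" unfolding PkK
          by (rule CollectI, rule exI[of _ "x0 + K - j"], rule exI[of _ "y0 + K + 1 - j"])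
             (simp add: T f3_def c D_def algebra_simps power2_eq_square)
        have N: "p \<notin> tri_Delta c (Dk k)" using T f3_def Delta_iff[of p c "Dk k"] j DD by simp
        define q where "q = (fst c + D - (3*K+2)*j, snd c + D - (3*K+2)*j)"
        have Q: "q \<in> tri_Delta c (Dk k)" using Delta_iff[of q c "Dk k"] DD q_def mono1[OF j] K1 j D_def K2
          by simp
        have W: "(p,q) \<in> tri_adj ^^ (nat j)" using walk_b_down[of "fst c + D - (3*K+2)*j" "snd c + D - (3*K+1)*j" "nat j", unfolded jn]
          by (simp add: T f3_def q_def jn algebra_simps)
        have "tri_dist_le p q k" unfolding tri_dist_le_def using W jk by blast
      then show ?thesis unfolding S_def using P N Q by blast
      qed
    qed
  qed
  have inj1: "inj_on f1 {1..K}" unfolding inj_on_def f1_def by simp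
  have inj2: "inj_on f2 {1..K}" unfolding inj_on_def f2_def by simp
  have inj3: "inj_on f3 {1..K}" unfolding inj_on_def f3_def by simp
  have cI: "card {1..K} = k" using K_def by simp
  have pr1: "snd x - snd c < 0" if xin: "x \<in> f1`{1..K}" for x
  proof -
    obtain j where j: "1 \<le> j" "j \<le> K" "x = f1 j" using xin by auto
    then show ?thesis by (simp add: f1_def)
  qed
  have pr2: "snd x - snd c > 0 \<and> (fst x - snd x) - (fst c - snd c) > 0" if xin: "x \<in> f2`{1..K}" for x
  proof -
    obtain j where j: "1 \<le> j" "j \<le> K" "x = f2 j" using xin by auto
    have m: "(3*K+1)*j \<le> 3*K^2+K" "(3*K+2)*j \<ge> 3*K+2" using mono1[OF j(1,2)] by auto
    have e1: "snd x - snd c = (3*K+2)*j" using j(3) by (simp add: f2_def)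
    have e2: "(fst x - snd x) - (fst c - snd c) = D - (3*K+1)*j" using j(3) by (simp add: f2_def algebra_simps)
    show ?thesis unfolding e1 e2 using m D_def K1 by linarith
  qed
  have pr3: "snd x - snd c > 0 \<and> (fst x - snd x) - (fst c - snd c) < 0" if xin: "x \<in> f3`{1..K}" for x
  proof -
    obtain j where j: "1 \<le> j" "j \<le> K" "x = f3 j" using xin by auto
    have m: "(3*K+1)*j \<le> 3*K^2+K" using mono1[OF j(1,2)] by auto
    have e1: "snd x - snd c = D - (3*K+1)*j" using j(3) by (simp add: f3_def)
    have e2: "(fst x - snd x) - (fst c - snd c) = - j" using j(3) by (simp add: f3_def algebra_simps)
    show ?thesis unfolding e1 e2 using m D_def K1 j by linarith
  qed
  have dj1: "f1`{1..K} \<inter> f2`{1..K} = {}"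
  proof (rule equals0I)
    fix x assume "x \<in> f1`{1..K} \<inter> f2`{1..K}"
    then show False using pr1 pr2 by fastforce
  qed
  have dj2: "(f1`{1..K} \<union> f2`{1..K}) \<inter> f3`{1..K} = {}"
  proof (rule equals0I)
    fix x assume a0: "x \<in> (f1`{1..K} \<union> f2`{1..K}) \<inter> f3`{1..K}"
    then have a: "x \<in> f1`{1..K} \<union> f2`{1..K}" "x \<in> f3`{1..K}" by auto
    have h3: "snd x - snd c > 0 \<and> (fst x - snd x) - (fst c - snd c) < 0" using pr3 a(2) by blast
    show False
    proof (cases "x \<in> f1`{1..K}")
      case True then show False using pr1 h3 by fastforce
    next
      case False then have "x \<in> f2`{1..K}" using a(1) by blast
      then show False using pr2 h3 by fastforce
    qed
  qed
  have c1: "card (f1`{1..K}) = k" using card_image[OF inj1] cI by simp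
  have c2: "card (f2`{1..K}) = k" using card_image[OF inj2] cI by simp
  have c3: "card (f3`{1..K}) = k" using card_image[OF inj3] cI by simp
  have "card (f1`{1..K} \<union> f2`{1..K}) = k + k"
    using card_Un_disjoint[OF _ _ dj1] c1 c2 by simp
  then have "card (f1`{1..K} \<union> f2`{1..K} \<union> f3`{1..K}) = k + k + k"
    using card_Un_disjoint[OF _ _ dj2] c3 by simp
  then have "card S = 3*k" unfolding seteq by simp
  moreover have "finite S" unfolding seteq by simp
  ultimately show ?thesis unfolding S_def by simp
qed

end
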